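(* Let $M$ be a combinatorial $3$-pseudomanifold with vertex set $V=V_1\dot\cup V_2$, and suppose the slicing $S=S_{(V_1,V_2)}$ is a weakly neighborly polyhedral map. For $i=1,2$ let $n_i$ be the number of vertices of $V_i$ that lie in the boundary of $\operatorname{span}(V_i)$ (i.e. that are joined by an edge of $M$ to a vertex of the other part). Then \[ n_1n_2\,(15-n_1n_2-n_1-n_2)=12\,\chi(S). \]
   Context: A combinatorial $3$-pseudomanifold is a finite pure $3$-dimensional simplicial complex in which the link of every vertex is a combinatorial surface. $\operatorname{span}(W)$ denotes the induced subcomplex on a vertex set $W$. A function $f:M\to\mathbb{R}$ is regular simplexwise linear (rsl) if it is linear on every simplex and takes pairwise distinct values on the vertices. Given a partition $V=V_1\dot\cup V_2$ of the vertex set into nonempty sets, choose an rsl-function $f$ with $f(v)<f(w)$ for all $v\in V_1$, $w\in V_2$ and $x_0$ strictly between $\max f(V_1)$ and $\min f(V_2)$; the slicing $S_{(V_1,V_2)}$ is the polyhedral surface $f^{-1}(x_0)$, whose facets are the triangles and quadrilaterals obtained by intersecting $f^{-1}(x_0)$ with the tetrahedra of $M$ meeting both parts; its vertices are the points where $f^{-1}(x_0)$ meets edges $\langle u,w\rangle$ of $M$ with $u\in V_1$, $w\in V_2$. A polyhedral map is weakly neighborly if any two of its vertices lie in a common face. $\chi$ denotes the Euler characteristic. *)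

theory Defs
  imports Main
begin

definition graph_connected :: "'v set \<Rightarrow> 'v set set \<Rightarrow> bool" where
  "graph_connected W E \<longleftrightarrow>
     (\<forall>x\<in>W. \<forall>y\<in>W. (x, y) \<in> {(a, b). {a, b} \<in> E}\<^sup>*)"

definition cycle_graph :: "'v set \<Rightarrow> 'v set set \<Rightarrow> bool" where
  "cycle_graph W E \<longleftrightarrow> finite W \<and> card W \<ge> 3 \<and>
     (\<forall>e\<in>E. e \<subseteq> W \<and> card e = 2) \<and>
     (\<forall>x\<in>W. card {e\<in>E. x \<in> e} = 2) \<and>
     graph_connected W E"

definition vlink :: "'a set set \<Rightarrow> 'a \<Rightarrow> 'a set set" where
  "vlink K v = {s - {v} | s. s \<in> K \<and> v \<in> s}"

definition combinatorial_surface :: "'a set set \<Rightarrow> bool" where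
  "combinatorial_surface L \<longleftrightarrow> finite L \<and> L \<noteq> {} \<and>
     (\<forall>t\<in>L. card t = 3) \<and>
     graph_connected (\<Union>L) {e. card e = 2 \<and> (\<exists>t\<in>L. e \<subseteq> t)} \<and>
     (\<forall>w\<in>\<Union>L. cycle_graph (\<Union>(vlink L w)) (vlink L w))"

text \<open>Combinatorial 3-pseudomanifold, given by its set of tetrahedra (facets);
  its vertex set is the union of the facets.\<close>
definition comb_3_pseudomanifold :: "'a set set \<Rightarrow> bool" where
  "comb_3_pseudomanifold T \<longleftrightarrow> finite T \<and> T \<noteq> {} \<and>
     (\<forall>s\<in>T. card s = 4) \<and>
     (\<forall>v\<in>\<Union>T. combinatorial_surface (vlink T v))"

text \<open>Edges of a simplex s meeting both parts; these are the vertices of the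
  slicing lying on s.\<close>
definition crossing :: "'a set \<Rightarrow> 'a set \<Rightarrow> 'a set \<Rightarrow> 'a set set" where
  "crossing V1 V2 s = {e. e \<subseteq> s \<and> card e = 2 \<and> e \<inter> V1 \<noteq> {} \<and> e \<inter> V2 \<noteq> {}}"

definition slice_vertices :: "'a set set \<Rightarrow> 'a set \<Rightarrow> 'a set \<Rightarrow> 'a set set" where
  "slice_vertices T V1 V2 = (\<Union>s\<in>T. crossing V1 V2 s)"

text \<open>Edges of the slicing: one for each triangle of M meeting both parts
  (represented by its set of two slicing vertices).\<close>
definition slice_edges :: "'a set set \<Rightarrow> 'a set \<Rightarrow> 'a set \<Rightarrow> 'a set set set" where
  "slice_edges T V1 V2 = {crossing V1 V2 t | t. card t = 3 \<and> (\<exists>s\<in>T. t \<subseteq> s) \<and>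
                                     t \<inter> V1 \<noteq> {} \<and> t \<inter> V2 \<noteq> {}}"

text \<open>Facets of the slicing (triangles / quadrilaterals): one for each
  tetrahedron of M meeting both parts (represented by its vertex set).\<close>
definition slice_faces :: "'a set set \<Rightarrow> 'a set \<Rightarrow> 'a set \<Rightarrow> 'a set set set" where
  "slice_faces T V1 V2 = {crossing V1 V2 s | s. s \<in> T \<and> s \<inter> V1 \<noteq> {} \<and> s \<inter> V2 \<noteq> {}}"

text \<open>A polygonal complex with vertices SV, edges SE (2-sets of vertices) and faces
  SF (vertex sets of the faces) is a polyhedral map if it is a connected closed
  surface (every face is a polygon, every edge lies in exactly two faces, the
  star of every vertex is a disk) and any two distinct faces meet in the empty
  set, a single vertex, or a common edge.\<close>
definition polyhedral_map :: "'v set \<Rightarrow> 'v set set \<Rightarrow> 'v set set \<Rightarrow> bool" where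
  "polyhedral_map SV SE SF \<longleftrightarrow> finite SV \<and> SV \<noteq> {} \<and>
     (\<forall>e\<in>SE. e \<subseteq> SV \<and> card e = 2) \<and>
     (\<forall>F\<in>SF. F \<subseteq> SV \<and> cycle_graph F {e\<in>SE. e \<subseteq> F}) \<and>
     (\<forall>e\<in>SE. card {F\<in>SF. e \<subseteq> F} = 2) \<and>
     (\<forall>v\<in>SV. cycle_graph {e\<in>SE. v \<in> e} {{e\<in>SE. v \<in> e \<and> e \<subseteq> F} | F. F \<in> SF \<and> v \<in> F}) \<and>
     graph_connected SV SE \<and>
     (\<forall>F\<in>SF. \<forall>G\<in>SF. F \<noteq> G \<longrightarrow> card (F \<inter> G) \<le> 1 \<or> F \<inter> G \<in> SE)"

definition weakly_neighborly :: "'v set \<Rightarrow> 'v set set \<Rightarrow> bool" where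
  "weakly_neighborly SV SF \<longleftrightarrow> (\<forall>a\<in>SV. \<forall>b\<in>SV. \<exists>F\<in>SF. a \<in> F \<and> b \<in> F)"

definition euler_char :: "'v set \<Rightarrow> 'v set set \<Rightarrow> 'v set set \<Rightarrow> int" where
  "euler_char SV SE SF = int (card SV) - int (card SE) + int (card SF)"

definition boundary_vertices :: "'a set set \<Rightarrow> 'a set \<Rightarrow> 'a set \<Rightarrow> 'a set" where
  "boundary_vertices T Vi Vj = {v\<in>Vi. \<exists>w\<in>Vj. \<exists>s\<in>T. {v, w} \<subseteq> s}"

end

theory Submission imports Defs begin

lemma dc:
  assumes "finite S" "finite X" "\<forall>F\<in>S. A F \<subseteq> X"
  shows "(\<Sum>F\<in>S. card (A F)) = (\<Sum>x\<in>X. card {F\<in>S. x \<in> A F})"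
proof -
  have 1: "card (A F) = (\<Sum>x\<in>X. if x \<in> A F then 1 else 0)" if "F \<in> S" for F
    using that assms by (simp add: sum.If_cases Int_absorb1 Int_absorb2 Int_def[symmetric] inf_commute)
  have 2: "card {F\<in>S. x \<in> A F} = (\<Sum>F\<in>S. if x \<in> A F then 1 else 0)" for x
    using assms by (simp add: sum.If_cases Int_def)
  show ?thesis using 1 2 by (simp add: sum.swap[of _ S X])
qed

lemma handshake:
  assumes "cycle_graph W E"
  shows "card E = card W"
proof -
  from assms have fW: "finite W" and Ec: "\<forall>e\<in>E. e \<subseteq> W \<and> card e = 2"
    and deg: "\<forall>x\<in>W. card {e\<in>E. x \<in> e} = 2" unfolding cycle_graph_def by auto
  have fE: "finite E" using Ec fW by (meson Pow_iff finite_Pow_iff rev_finite_subset subsetI)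
  have "(\<Sum>x\<in>W. card {e\<in>E. x \<in> e}) = (\<Sum>e\<in>E. card {x\<in>W. x \<in> e})"
    using dc[of W E "\<lambda>x. {e\<in>E. x \<in> e}"] fW fE by auto
  also have "\<dots> = (\<Sum>e\<in>E. 2)"
  proof (intro sum.cong refl)
    fix e assume "e \<in> E"
    then have "{x\<in>W. x \<in> e} = e" using Ec by auto
    then show "card {x\<in>W. x \<in> e} = 2" using Ec \<open>e \<in> E\<close> by simp
  qed
  finally show ?thesis using deg by simp
qed

definition pimg :: "'a set \<Rightarrow> 'a set \<Rightarrow> 'a set set" where
  "pimg P Q = (\<lambda>(v,w). {v,w}) ` (P \<times> Q)"

lemma pimg_inj:
  assumes "V1 \<inter> V2 = {}" "P \<subseteq> V1" "Q \<subseteq> V2"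
  shows "inj_on (\<lambda>(v,w). {v,w}) (P \<times> Q)"
  using assms unfolding inj_on_def by (auto simp: doubleton_eq_iff)

lemma pimg_card:
  assumes "V1 \<inter> V2 = {}" "P \<subseteq> V1" "Q \<subseteq> V2"
  shows "card (pimg P Q) = card P * card Q"
  unfolding pimg_def using card_image[OF pimg_inj[OF assms]] by (simp add: card_cartesian_product)

lemma pimg_disj:
  assumes "V1 \<inter> V2 = {}" "P \<subseteq> V1" "Q \<subseteq> V2" "a \<in> P" "c \<in> Q"
  shows "{y\<in>pimg P Q. {a,c} \<inter> y = {}} = pimg (P-{a}) (Q-{c})"
  using assms unfolding pimg_def by auto

lemma pimg_sum:
  assumes "V1 \<inter> V2 = {}" "P \<subseteq> V1" "Q \<subseteq> V2" "finite P" "finite Q"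
  shows "(\<Sum>x\<in>pimg P Q. card {y\<in>pimg P Q. x \<inter> y = {}}) = card P * card Q * (card P - 1) * (card Q - 1)"
proof -
  have "(\<Sum>x\<in>pimg P Q. card {y\<in>pimg P Q. x \<inter> y = {}})
      = (\<Sum>(a,c)\<in>P\<times>Q. card {y\<in>pimg P Q. {a,c} \<inter> y = {}})"
    unfolding pimg_def by (subst sum.reindex[OF pimg_inj[OF assms(1-3)]]) (simp add: case_prod_beta)
  also have "\<dots> = (\<Sum>(a,c)\<in>P\<times>Q. (card P - 1) * (card Q - 1))"
  proof (intro sum.cong refl, clarify)
    fix a c assume ac: "a \<in> P" "c \<in> Q"
    have "card {y\<in>pimg P Q. {a,c} \<inter> y = {}} = card (pimg (P-{a}) (Q-{c}))"
      using pimg_disj[OF assms(1-3) ac] by simp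
    also have "\<dots> = card (P-{a}) * card (Q-{c})"
      using assms by (intro pimg_card[OF assms(1)]) auto
    finally show "card {y\<in>pimg P Q. {a,c} \<inter> y = {}} = (card P - 1) * (card Q - 1)"
      using ac assms by simp
  qed
  also have "\<dots> = card P * card Q * (card P - 1) * (card Q - 1)"
    by (simp add: card_cartesian_product)
  finally show ?thesis .
qed

lemma crossing_pimg:
  assumes "V1 \<inter> V2 = {}" "s \<subseteq> V1 \<union> V2"
  shows "crossing V1 V2 s = pimg (s \<inter> V1) (s \<inter> V2)"
proof
  show "crossing V1 V2 s \<subseteq> pimg (s \<inter> V1) (s \<inter> V2)"
  proof
    fix e assume "e \<in> crossing V1 V2 s"
    then have e: "e \<subseteq> s" "card e = 2" "e \<inter> V1 \<noteq> {}" "e \<inter> V2 \<noteq> {}" unfolding crossing_def by auto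
    then obtain x y where xy: "e = {x,y}" "x \<noteq> y" by (meson card_2_iff)
    show "e \<in> pimg (s \<inter> V1) (s \<inter> V2)" unfolding pimg_def
      using e xy assms by (auto simp: image_iff)
  qed
next
  show "pimg (s \<inter> V1) (s \<inter> V2) \<subseteq> crossing V1 V2 s"
    unfolding pimg_def crossing_def using assms by (auto simp: card_insert_if disjoint_iff)
qed

lemma choose2: "2 * (n choose 2) = n * (n - 1)"
  by (induction n) (auto simp: choose_two)

lemma face_arith:
  assumes "p + q = (4::nat)" "p \<ge> 1" "q \<ge> 1"
  shows "int (p*q*(p-1)*(q-1)) = 4 * int (p*q choose 2) - 8 * int (p*q) + 12"
proof -
  have "p = 1 \<and> q = 3 \<or> p = 2 \<and> q = 2 \<or> p = 3 \<and> q = 1" using assms by auto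
  then show ?thesis by (auto simp: choose_two)
qed


theorem lemma5p4:
  fixes T :: "'a set set" and V1 V2 :: "'a set"
  assumes "comb_3_pseudomanifold T"
    and "V1 \<union> V2 = \<Union>T" and "V1 \<inter> V2 = {}" and "V1 \<noteq> {}" and "V2 \<noteq> {}"
    and "polyhedral_map (slice_vertices T V1 V2) (slice_edges T V1 V2) (slice_faces T V1 V2)"
    and "weakly_neighborly (slice_vertices T V1 V2) (slice_faces T V1 V2)"
  shows "int (card (boundary_vertices T V1 V2)) * int (card (boundary_vertices T V2 V1)) *
           (15 - int (card (boundary_vertices T V1 V2)) * int (card (boundary_vertices T V2 V1))
               - int (card (boundary_vertices T V1 V2)) - int (card (boundary_vertices T V2 V1)))
         = 12 * euler_char (slice_vertices T V1 V2) (slice_edges T V1 V2) (slice_faces T V1 V2)"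
proof -
  define SV where "SV = slice_vertices T V1 V2"
  define SE where "SE = slice_edges T V1 V2"
  define SF where "SF = slice_faces T V1 V2"
  define B1 where "B1 = boundary_vertices T V1 V2"
  define B2 where "B2 = boundary_vertices T V2 V1"
  have disj: "V1 \<inter> V2 = {}" by fact
  from assms(1) have fT: "finite T" and cT: "\<forall>s\<in>T. card s = 4"
    unfolding comb_3_pseudomanifold_def by auto
  have sU: "\<forall>s\<in>T. s \<subseteq> V1 \<union> V2" using assms(2) by auto
  have fs: "\<forall>s\<in>T. finite s" using cT by (metis card.infinite zero_neq_numeral)
  have cross: "\<forall>s\<in>T. crossing V1 V2 s = pimg (s\<inter>V1) (s\<inter>V2)"
    using crossing_pimg[OF disj] sU by auto
  from assms(6) have fSV: "finite SV" and SVne: "SV \<noteq> {}"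
    and SEc: "\<forall>e\<in>SE. e \<subseteq> SV \<and> card e = 2"
    and SFc: "\<forall>F\<in>SF. F \<subseteq> SV \<and> cycle_graph F {e\<in>SE. e \<subseteq> F}"
    and SE2: "\<forall>e\<in>SE. card {F\<in>SF. e \<subseteq> F} = 2"
    and inter: "\<forall>F\<in>SF. \<forall>G\<in>SF. F \<noteq> G \<longrightarrow> card (F \<inter> G) \<le> 1 \<or> F \<inter> G \<in> SE"
    unfolding polyhedral_map_def SV_def SE_def SF_def by auto
  from assms(7) have wn: "\<forall>a\<in>SV. \<forall>b\<in>SV. \<exists>F\<in>SF. a \<in> F \<and> b \<in> F"
    unfolding weakly_neighborly_def SV_def SF_def by auto
  have SFe: "\<forall>F\<in>SF. \<exists>s\<in>T. F = crossing V1 V2 s \<and> s\<inter>V1 \<noteq> {} \<and> s\<inter>V2 \<noteq> {}"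
    unfolding SF_def slice_faces_def by auto
  have fSF: "finite SF"
  proof -
    have "SF \<subseteq> (\<lambda>s. crossing V1 V2 s) ` T" using SFe by auto
    then show ?thesis using fT finite_surj by blast
  qed
  have fSE: "finite SE"
    using SEc fSV by (meson Pow_iff finite_Pow_iff rev_finite_subset subsetI)
  have fF: "\<forall>F\<in>SF. finite F" using SFc fSV finite_subset by blast
  have fUT: "finite (\<Union>T)" using fT fs by auto
  have fB1: "finite B1" and fB2: "finite B2"
    using fUT assms(2) unfolding B1_def B2_def boundary_vertices_def
    by (auto intro: finite_subset[of _ "\<Union>T"])
  have B1V: "B1 \<subseteq> V1" and B2V: "B2 \<subseteq> V2"
    unfolding B1_def B2_def boundary_vertices_def by auto
  have SVeq: "SV = pimg B1 B2"
  proof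
    show "SV \<subseteq> pimg B1 B2"
    proof
      fix x assume "x \<in> SV"
      then obtain s where s: "s \<in> T" "x \<in> crossing V1 V2 s"
        unfolding SV_def slice_vertices_def by auto
      then obtain a c where "x = {a,c}" "a \<in> s" "a \<in> V1" "c \<in> s" "c \<in> V2"
        using cross unfolding pimg_def by auto
      then show "x \<in> pimg B1 B2" using s unfolding pimg_def B1_def B2_def boundary_vertices_def
        by (auto simp: image_iff)
    qed
  next
    show "pimg B1 B2 \<subseteq> SV"
    proof
      fix x assume "x \<in> pimg B1 B2"
      then obtain v w where x: "x = {v,w}" "v \<in> B1" "w \<in> B2" unfolding pimg_def by auto
      then obtain w' s where s: "w' \<in> V2" "s \<in> T" "{v,w'} \<subseteq> s" "v \<in> V1"
        unfolding B1_def boundary_vertices_def by auto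
      from x obtain v' s' where s': "v' \<in> V1" "s' \<in> T" "{w,v'} \<subseteq> s'" "w \<in> V2"
        unfolding B2_def boundary_vertices_def by auto
      have "{v,w'} \<in> crossing V1 V2 s" using s cross unfolding pimg_def by auto
      then have a1: "{v,w'} \<in> SV" using s unfolding SV_def slice_vertices_def by auto
      have "{v',w} \<in> crossing V1 V2 s'" using s' cross unfolding pimg_def by auto
      then have a2: "{v',w} \<in> SV" using s' unfolding SV_def slice_vertices_def by auto
      obtain F where F: "F \<in> SF" "{v,w'} \<in> F" "{v',w} \<in> F" using wn a1 a2 by blast
      then obtain s'' where s'': "s'' \<in> T" "F = crossing V1 V2 s''" using SFe by auto
      have "v \<in> s''" "w \<in> s''" using F s'' unfolding crossing_def by auto
      then have "x \<in> crossing V1 V2 s''" using cross s'' x s s' unfolding pimg_def by auto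
      then show "x \<in> SV" using s'' unfolding SV_def slice_vertices_def by auto
    qed
  qed
  have cardSV: "card SV = card B1 * card B2"
    using SVeq pimg_card[OF disj B1V B2V] by simp
  have SVc: "\<forall>x\<in>SV. x \<noteq> {}" using SVeq unfolding pimg_def by auto
  have SEint: "\<forall>e\<in>SE. \<forall>x\<in>e. \<forall>y\<in>e. x \<inter> y \<noteq> {}"
  proof (intro ballI)
    fix e x y assume e: "e \<in> SE" and x: "x \<in> e" and y: "y \<in> e"
    then obtain t s where t: "e = crossing V1 V2 t" "card t = 3" "s \<in> T" "t \<subseteq> s"
      unfolding SE_def slice_edges_def by auto
    then have "t \<subseteq> V1 \<union> V2" using sU by auto
    then have "e = pimg (t\<inter>V1) (t\<inter>V2)" using t crossing_pimg[OF disj] by auto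
    then obtain a c b d where ac: "x = {a,c}" "a \<in> t" "a \<in> V1" "c \<in> t" "c \<in> V2"
      and bd: "y = {b,d}" "b \<in> t" "b \<in> V1" "d \<in> t" "d \<in> V2"
      using x y unfolding pimg_def by auto
    show "x \<inter> y \<noteq> {}"
    proof
      assume "x \<inter> y = {}"
      then have ne: "a \<noteq> b" "c \<noteq> d" using ac bd by auto
      have "a \<noteq> c" "a \<noteq> d" "b \<noteq> c" "b \<noteq> d" using ac bd disj by auto
      then have "card {a,b,c,d} = 4" using ne by auto
      moreover have "card {a,b,c,d} \<le> card t"
        using ac bd t by (intro card_mono) (auto intro: card_ge_0_finite)
      ultimately show False using t by simp
    qed
  qed
  have uniq: "F = G" if "p \<subseteq> F" "p \<subseteq> G" "F \<in> SF" "G \<in> SF" "card p = 2" "p \<notin> SE" for p F G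
  proof (rule ccontr)
    assume "F \<noteq> G"
    then have i: "card (F \<inter> G) \<le> 1 \<or> F \<inter> G \<in> SE" using inter that by auto
    have "p \<subseteq> F \<inter> G" using that by auto
    then have "card p \<le> card (F \<inter> G)" using fF that by (intro card_mono) auto
    then have "F \<inter> G \<in> SE" using i that by auto
    then have "card (F \<inter> G) = 2" using SEc by auto
    then have "p = F \<inter> G" using \<open>p \<subseteq> F \<inter> G\<close> fF that
      by (metis card_subset_eq finite_Int)
    then show False using that \<open>F \<inter> G \<in> SE\<close> by simp
  qed
  have one: "card {F\<in>SF. x \<in> F \<and> y \<in> F} = 1" if "x \<in> SV" "y \<in> SV" "x \<noteq> y" "{x,y} \<notin> SE" for x y
  proof -
    have "\<exists>F\<in>SF. x \<in> F \<and> y \<in> F" using wn that(1,2) by simp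
    then obtain F where F: "F \<in> SF" "x \<in> F" "y \<in> F" by blast
    have "{F\<in>SF. x \<in> F \<and> y \<in> F} = {F}"
    proof (intro equalityI subsetI)
      fix G assume "G \<in> {F\<in>SF. x \<in> F \<and> y \<in> F}"
      then have G: "{x,y} \<subseteq> G" "G \<in> SF" by auto
      have "{x,y} \<subseteq> F" using F by auto
      moreover have "card {x,y} = 2" using that by simp
      ultimately have "G = F" using uniq[OF G(1) _ G(2) F(1)] that(4) by blast
      then show "G \<in> {F}" by simp
    next
      fix G assume "G \<in> {F}"
      then show "G \<in> {F\<in>SF. x \<in> F \<and> y \<in> F}" using F by auto
    qed
    then show ?thesis by simp
  qed
  have SB: "(\<Sum>F\<in>SF. card F) = 2 * card SE"
  proof -
    have "(\<Sum>F\<in>SF. card F) = (\<Sum>F\<in>SF. card {e\<in>SE. e \<subseteq> F})"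
    proof (intro sum.cong refl)
      fix F assume "F \<in> SF"
      then show "card F = card {e\<in>SE. e \<subseteq> F}" using handshake[of F "{e\<in>SE. e \<subseteq> F}"] SFc by simp
    qed
    also have "\<dots> = (\<Sum>e\<in>SE. card {F\<in>SF. e \<in> {e\<in>SE. e \<subseteq> F}})"
      by (rule dc[OF fSF fSE]) auto
    also have "\<dots> = (\<Sum>e\<in>SE. 2)"
      using SE2 by (intro sum.cong) auto
    finally show ?thesis by simp
  qed
  define X where "X = {p. p \<subseteq> SV \<and> card p = 2}"
  have fX: "finite X" unfolding X_def using fSV by auto
  have SEX: "SE \<subseteq> X" unfolding X_def using SEc by auto
  have SC: "(\<Sum>F\<in>SF. card F choose 2) = (card SV choose 2) + card SE"
  proof -
    have "(\<Sum>F\<in>SF. card F choose 2) = (\<Sum>F\<in>SF. card {p. p \<subseteq> F \<and> card p = 2})"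
      using fF by (intro sum.cong) (auto simp: n_subsets)
    also have "\<dots> = (\<Sum>p\<in>X. card {F\<in>SF. p \<in> {p. p \<subseteq> F \<and> card p = 2}})"
      using SFc by (intro dc[OF fSF fX]) (auto simp: X_def)
    also have "\<dots> = (\<Sum>p\<in>X. 1 + (if p \<in> SE then 1 else 0))"
    proof (intro sum.cong refl)
      fix p assume p: "p \<in> X"
      show "card {F\<in>SF. p \<in> {p. p \<subseteq> F \<and> card p = 2}} = 1 + (if p \<in> SE then 1 else 0)"
      proof (cases "p \<in> SE")
        case True
        then show ?thesis using SE2 p by (auto simp: X_def)
      next
        case False
        from p obtain x y where xy: "p = {x,y}" "x \<noteq> y" "x \<in> SV" "y \<in> SV"
          unfolding X_def by (auto simp: card_2_iff)
        have "{F\<in>SF. p \<in> {p. p \<subseteq> F \<and> card p = 2}} = {F\<in>SF. x \<in> F \<and> y \<in> F}"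
          using xy p by (auto simp: X_def)
        then show ?thesis using one[OF xy(3,4,2)] False xy by simp
      qed
    qed
    also have "\<dots> = card X + card SE"
      using fX SEX Int_absorb1[OF SEX] Int_absorb2[OF SEX] by (simp only: sum.distrib) (simp add: sum.If_cases)
    finally show ?thesis unfolding X_def using fSV by (simp add: n_subsets)
  qed
  define D where "D = (\<lambda>F::'a set set. Sigma F (\<lambda>x. {y\<in>F. x \<inter> y = {}}))"
  have fD: "finite (D SV)" unfolding D_def using fSV by auto
  have SD: "(\<Sum>F\<in>SF. card (D F)) = card SV * (card B1 - 1) * (card B2 - 1)"
  proof -
    have "(\<Sum>F\<in>SF. card (D F)) = (\<Sum>q\<in>D SV. card {F\<in>SF. q \<in> D F})"
    proof (rule dc[OF fSF fD], intro ballI)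
      fix F assume "F \<in> SF"
      then have "F \<subseteq> SV" using SFc by blast
      then show "D F \<subseteq> D SV" unfolding D_def by blast
    qed
    also have "\<dots> = (\<Sum>q\<in>D SV. 1)"
    proof (intro sum.cong refl)
      fix q assume "q \<in> D SV"
      then obtain x y where q: "q = (x,y)" "x \<in> SV" "y \<in> SV" "x \<inter> y = {}"
        unfolding D_def by auto
      then have "x \<noteq> y" using SVc by auto
      moreover have "{x,y} \<notin> SE"
      proof
        assume "{x,y} \<in> SE"
        then have "x \<inter> y \<noteq> {}" using SEint by simp
        then show False using q(4) by simp
      qed
      moreover have "{F\<in>SF. q \<in> D F} = {F\<in>SF. x \<in> F \<and> y \<in> F}"
        using q unfolding D_def by auto
      ultimately show "card {F\<in>SF. q \<in> D F} = 1" using one[OF q(2,3)] by simp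
    qed
    also have "\<dots> = card (D SV)" by simp
    also have "\<dots> = (\<Sum>x\<in>SV. card {y\<in>SV. x \<inter> y = {}})"
      unfolding D_def using fSV by (simp add: card_SigmaI)
    also have "\<dots> = card B1 * card B2 * (card B1 - 1) * (card B2 - 1)"
      unfolding SVeq by (rule pimg_sum[OF disj B1V B2V fB1 fB2])
    finally show ?thesis using cardSV by simp
  qed
  have PF: "int (card (D F)) = 4 * int (card F choose 2) - 8 * int (card F) + 12" if F: "F \<in> SF" for F
  proof -
    obtain s where s: "s \<in> T" "F = crossing V1 V2 s" "s\<inter>V1 \<noteq> {}" "s\<inter>V2 \<noteq> {}"
      using SFe F by meson
    define P where "P = s \<inter> V1"
    define Q where "Q = s \<inter> V2"
    have FPQ: "F = pimg P Q" using s cross P_def Q_def by auto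
    have fP: "finite P" "finite Q" using fs s P_def Q_def by auto
    have "s = P \<union> Q" using sU s P_def Q_def by auto
    then have "card P + card Q = 4" using cT s fP disj P_def Q_def
      by (metis card_Un_disjoint inf_assoc inf_bot_right inf_left_commute)
    moreover have "card P \<ge> 1" "card Q \<ge> 1" using fP s P_def Q_def
      by (auto simp: Suc_le_eq card_gt_0_iff)
    moreover have "card F = card P * card Q"
      using FPQ pimg_card[OF disj] P_def Q_def by auto
    moreover have "card (D F) = card P * card Q * (card P - 1) * (card Q - 1)"
    proof -
      have "card (D F) = (\<Sum>x\<in>F. card {y\<in>F. x \<inter> y = {}})"
        unfolding D_def using fF F by (simp add: card_SigmaI)
      then show ?thesis using pimg_sum[OF disj _ _ fP] FPQ P_def Q_def by simp
    qed
    ultimately show ?thesis using face_arith by simp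
  qed
  have sumPF: "(\<Sum>F\<in>SF. int (card (D F))) = 4 * (\<Sum>F\<in>SF. int (card F choose 2)) - 8 * (\<Sum>F\<in>SF. int (card F)) + 12 * int (card SF)"
    using PF by (simp add: sum.distrib sum_subtractf sum_distrib_left)
  have I1: "(\<Sum>F\<in>SF. int (card F)) = 2 * int (card SE)"
    using SB by (metis of_nat_mult of_nat_numeral of_nat_sum)
  have I2: "(\<Sum>F\<in>SF. int (card F choose 2)) = int (card SV choose 2) + int (card SE)"
    using SC by (metis of_nat_add of_nat_sum)
  have I3: "(\<Sum>F\<in>SF. int (card (D F))) = int (card SV * (card B1 - 1) * (card B2 - 1))"
    using SD by (metis of_nat_sum)
  have N2: "2 * int (card SV choose 2) = int (card SV) * (int (card SV) - 1)"
  proof -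
    have "card SV \<ge> 1" using fSV SVne by (simp add: Suc_le_eq card_gt_0_iff)
    then show ?thesis using choose2[of "card SV"] by (metis of_nat_1 of_nat_diff of_nat_mult of_nat_numeral)
  qed
  have n1: "card B1 \<ge> 1" and n2: "card B2 \<ge> 1"
  proof -
    have "card SV \<noteq> 0" using fSV SVne by simp
    then show "card B1 \<ge> 1" "card B2 \<ge> 1" using cardSV by auto
  qed
  have I3': "int (card SV * (card B1 - 1) * (card B2 - 1)) = int (card B1) * int (card B2) * (int (card B1) - 1) * (int (card B2) - 1)"
    using n1 n2 cardSV by (simp add: of_nat_diff)
  have E: "euler_char SV SE SF = int (card SV) - int (card SE) + int (card SF)"
    unfolding euler_char_def by simp
  show ?thesis
    unfolding SV_def[symmetric] SE_def[symmetric] SF_def[symmetric] B1_def[symmetric] B2_def[symmetric] E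
    using sumPF I1 I2 I3 I3' N2 cardSV
    by (simp add: algebra_simps)
qed

end
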